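(* Let $n\geq 1$ and let $D_i$ ($i<n$) be digraphs on vertex sets $V_i$ (finite or infinite) such that there is a single set $R$ with $V_i\cap V_j=R$ for all $i<j<n$, and for all $i<j<n$ there is a digraph isomorphism $\psi_{i,j}:V_i\to V_j$ from $D_i$ to $D_j$ which is the identity on $R$. Then $D=\bigcup\{D_i:i<n\}$ (vertex set $\bigcup V_i$, arc set $\bigcup E(D_i)$) is a digraph. Fix $k\geq 3$ and assume each $D_i$ has digirth bigger than $k$. Then: (1) for $i<j<n$ and $\alpha\in V_i\setminus R$, every directed path in $D$ from $\alpha$ to $\psi_{i,j}(\alpha)$ has length $>k$; (2) $D$ has digirth bigger than $k$; (3) if moreover $n>k$ and $\alpha_i\in V_i\setminus R$ ($i<n$) satisfy $\alpha_j=\psi_{i,j}(\alpha_i)$ for $i<j<n$, then the digraph $D^*$ with $V(D^* )=V(D)$ and $E(D^* )=E(D)\cup\{\alpha_{n-1}\alpha_0\}\cup\{\alpha_i\alpha_{i+1}:i<n-1\}$ has digirth bigger than $k$.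
   Context: A digraph is a pair $D=(V,E)$ with $E\subseteq V^2$ such that $uv\in E$ implies $vu\notin E$. The digirth is the length of the shortest directed cycle; the length of a path is its number of arcs. *)

theory Defs
  imports Main
begin

definition digraph :: "'a set \<Rightarrow> ('a \<times> 'a) set \<Rightarrow> bool" where
  "digraph V E \<longleftrightarrow> E \<subseteq> V \<times> V \<and> (\<forall>u v. (u, v) \<in> E \<longrightarrow> (v, u) \<notin> E)"

text \<open>A directed path, given as the (nonempty, repetition-free) list of its vertices
  v_0,...,v_m; its length (number of arcs) is length p - 1.\<close>
definition dpath :: "'a set \<Rightarrow> ('a \<times> 'a) set \<Rightarrow> 'a list \<Rightarrow> bool" where
  "dpath V E p \<longleftrightarrow> p \<noteq> [] \<and> distinct p \<and> set p \<subseteq> V \<and>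
     (\<forall>i. Suc i < length p \<longrightarrow> (p ! i, p ! Suc i) \<in> E)"

text \<open>A directed cycle, given as the (nonempty, repetition-free) list of its vertices
  v_0,...,v_{m-1} with arcs v_i v_{i+1 mod m}; its length is length c.\<close>
definition dcycle :: "'a set \<Rightarrow> ('a \<times> 'a) set \<Rightarrow> 'a list \<Rightarrow> bool" where
  "dcycle V E c \<longleftrightarrow> c \<noteq> [] \<and> distinct c \<and> set c \<subseteq> V \<and>
     (\<forall>i < length c. (c ! i, c ! ((i + 1) mod length c)) \<in> E)"

text \<open>Digirth bigger than k: every directed cycle has length > k
  (vacuous for acyclic digraphs, whose digirth is infinite).\<close>
definition digirth_gt :: "'a set \<Rightarrow> ('a \<times> 'a) set \<Rightarrow> nat \<Rightarrow> bool" where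
  "digirth_gt V E k \<longleftrightarrow> (\<forall>c. dcycle V E c \<longrightarrow> k < length c)"

end

theory Submission
  imports Defs
begin


lemma closed_walk_cycle:
  assumes "E \<subseteq> V \<times> V"
  shows "(x, x) \<in> E ^^ m \<Longrightarrow> 1 \<le> m \<Longrightarrow> \<exists>c. dcycle V E c \<and> length c \<le> m"
proof (induction m arbitrary: x rule: less_induct)
  case (less m)
  from less.prems(1) obtain f where f0: "f 0 = x" and fm: "f m = x"
    and st: "\<forall>i<m. (f i, f (Suc i)) \<in> E" unfolding relpow_fun_conv by blast
  show ?case
  proof (cases "distinct (map f [0..<m])")
    case True
    have fm': "\<And>i. i < m \<Longrightarrow> f ((i+1) mod m) = f (i+1)"
    proof -
      fix i assume "i < m"
      show "f ((i+1) mod m) = f (i+1)"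
      proof (cases "i + 1 < m")
        case True then show ?thesis by simp
      next
        case False then have "i + 1 = m" using \<open>i<m\<close> by simp
        then show ?thesis using f0 fm by simp
      qed
    qed
    have "dcycle V E (map f [0..<m])"
      unfolding dcycle_def
    proof (intro conjI allI impI)
      show "map f [0..<m] \<noteq> []" using less.prems(2) by simp
      show "distinct (map f [0..<m])" by fact
      show "set (map f [0..<m]) \<subseteq> V" using st assms by fastforce
      fix i assume "i < length (map f [0..<m])"
      then have i: "i < m" by simp
      have "((i+1) mod m) < m" using i by simp
      then show "(map f [0..<m] ! i, map f [0..<m] ! ((i + 1) mod length (map f [0..<m]))) \<in> E"
        using st i fm'[OF i] by simp
    qed
    then show ?thesis by force
  next
    case False
    then obtain a b where ab: "a < m" "b < m" "a \<noteq> b" "f a = f b"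
      by (auto simp: distinct_conv_nth)
    obtain a' b' where ab': "a' < b'" "b' < m" "f a' = f b'"
      using ab by (metis linorder_neq_iff)
    have "(f a', f b') \<in> E ^^ (b' - a')"
      unfolding relpow_fun_conv
      by (rule exI[of _ "\<lambda>i. f (a' + i)"]) (use ab' st in auto)
    then have "(f a', f a') \<in> E ^^ (b' - a')" using ab' by simp
    moreover have "b' - a' < m" "1 \<le> b' - a'" using ab' by auto
    ultimately obtain c where "dcycle V E c" "length c \<le> b' - a'" using less.IH by blast
    then show ?thesis using ab' by (intro exI[of _ c]) auto
  qed
qed

lemma map_relpow:
  assumes "\<And>u v. (u, v) \<in> A \<Longrightarrow> (g u, g v) \<in> B"
  shows "(x, y) \<in> A ^^ m \<Longrightarrow> (g x, g y) \<in> B ^^ m"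
proof (induction m arbitrary: y)
  case 0 then show ?case by simp
next
  case (Suc m)
  then obtain z where "(x, z) \<in> A ^^ m" "(z, y) \<in> A" by auto
  then show ?case using Suc.IH assms by auto
qed

lemma lazy_relpow:
  "(x, y) \<in> (B \<union> Id) ^^ m \<Longrightarrow> \<exists>j\<le>m. (x, y) \<in> B ^^ j"
proof (induction m arbitrary: y)
  case 0 then show ?case by auto
next
  case (Suc m)
  then obtain z where z: "(x, z) \<in> (B \<union> Id) ^^ m" "(z, y) \<in> B \<union> Id" by auto
  from Suc.IH[OF z(1)] obtain j where j: "j \<le> m" "(x, z) \<in> B ^^ j" by auto
  show ?case
  proof (cases "(z, y) \<in> B")
    case True then show ?thesis using j by (intro exI[of _ "Suc j"]) auto
  next
    case False then have "z = y" using z by auto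
    then show ?thesis using j by (intro exI[of _ j]) auto
  qed
qed

lemma cycle_relpow:
  assumes "dcycle V E c" "s < length c"
  shows "t \<le> length c \<Longrightarrow> (c ! s, c ! ((s + t) mod length c)) \<in> E ^^ t"
proof (induction t)
  case 0 then show ?case using assms(2) by simp
next
  case (Suc t)
  note assms
  let ?m = "length c"
  have m: "0 < ?m" using assms(2) by linarith
  have "((s + t) mod ?m) < ?m" using m by simp
  then have "(c ! ((s + t) mod ?m), c ! (((s + t) mod ?m + 1) mod ?m)) \<in> E"
    using assms(1) unfolding dcycle_def by blast
  moreover have "((s + t) mod ?m + 1) mod ?m = (s + Suc t) mod ?m"
    by (simp add: mod_Suc_eq)
  ultimately show ?case using Suc by auto
qed

lemma path_relpow:
  assumes "dpath V E p"
  shows "(hd p, last p) \<in> E ^^ (length p - 1)"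
proof -
  have ne: "p \<noteq> []" using assms unfolding dpath_def by blast
  show ?thesis unfolding relpow_fun_conv
    apply (rule exI[of _ "\<lambda>i. p ! i"])
    using assms ne by (auto simp: dpath_def hd_conv_nth last_conv_nth)
qed

locale L =
  fixes n :: nat
    and V :: "nat \<Rightarrow> 'a set"
    and E :: "nat \<Rightarrow> ('a \<times> 'a) set"
    and R :: "'a set"
    and \<psi> :: "nat \<Rightarrow> nat \<Rightarrow> 'a \<Rightarrow> 'a"
  assumes n_pos: "n \<ge> 1"
    and digr: "\<And>i. i < n \<Longrightarrow> digraph (V i) (E i)"
    and inter: "\<And>i j. i < j \<Longrightarrow> j < n \<Longrightarrow> V i \<inter> V j = R"
    and bij: "\<And>i j. i < j \<Longrightarrow> j < n \<Longrightarrow> bij_betw (\<psi> i j) (V i) (V j)"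
    and iso: "\<And>i j u v. i < j \<Longrightarrow> j < n \<Longrightarrow> u \<in> V i \<Longrightarrow> v \<in> V i \<Longrightarrow>
                ((u, v) \<in> E i \<longleftrightarrow> (\<psi> i j u, \<psi> i j v) \<in> E j)"
    and idR: "\<And>i j x. i < j \<Longrightarrow> j < n \<Longrightarrow> x \<in> R \<Longrightarrow> \<psi> i j x = x"
begin

definition h :: "nat \<Rightarrow> nat \<Rightarrow> 'a \<Rightarrow> 'a" where
  "h t l x = (if l = t then x else if l < t then \<psi> l t x else inv_into (V t) (\<psi> t l) x)"

definition g :: "nat \<Rightarrow> 'a \<Rightarrow> 'a" where
  "g t x = h t (SOME l. l < n \<and> x \<in> V l) x"

lemma Esub: "i < n \<Longrightarrow> E i \<subseteq> V i \<times> V i"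
  using digr unfolding digraph_def by blast

lemma h_R:
  assumes "l < n" "t < n" "x \<in> R" "x \<in> V l"
  shows "h t l x = x"
proof -
  consider "l = t" | "l < t" | "t < l" by linarith
  then show ?thesis
  proof cases
    case 1 then show ?thesis by (simp add: h_def)
  next
    case 2 then show ?thesis using idR assms by (simp add: h_def)
  next
    case 3
    have xt: "x \<in> V t" using inter[OF 3 assms(1)] assms(3) by blast
    have "inv_into (V t) (\<psi> t l) (\<psi> t l x) = x"
      using bij_betw_imp_inj_on[OF bij[OF 3 assms(1)]] xt by (simp add: inv_into_f_f)
    then show ?thesis using 3 idR[OF 3 assms(1) assms(3)] by (simp add: h_def)
  qed
qed

lemma h_edge:
  assumes "l < n" "t < n" "(u, v) \<in> E l"
  shows "(h t l u, h t l v) \<in> E t"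
proof -
  have uv: "u \<in> V l" "v \<in> V l" using Esub[OF assms(1)] assms(3) by auto
  consider "l = t" | "l < t" | "t < l" by linarith
  then show ?thesis
  proof cases
    case 1 then show ?thesis using assms by (simp add: h_def)
  next
    case 2 then show ?thesis using iso[OF 2 assms(2) uv] assms by (simp add: h_def)
  next
    case 3
    have b: "bij_betw (\<psi> t l) (V t) (V l)" using bij[OF 3 assms(1)] .
    have im: "\<psi> t l ` V t = V l" using b by (simp add: bij_betw_def)
    let ?u = "inv_into (V t) (\<psi> t l) u" and ?v = "inv_into (V t) (\<psi> t l) v"
    have "?u \<in> V t" "?v \<in> V t" using uv im by (auto intro: inv_into_into)
    moreover have "\<psi> t l ?u = u" "\<psi> t l ?v = v" using uv im by (auto simp: f_inv_into_f)
    ultimately have "(?u, ?v) \<in> E t" using iso[OF 3 assms(1)] assms(3) by metis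
    then show ?thesis using 3 by (simp add: h_def)
  qed
qed

lemma g_eq:
  assumes "l < n" "t < n" "x \<in> V l"
  shows "g t x = h t l x"
proof -
  let ?l = "SOME l. l < n \<and> x \<in> V l"
  have l': "?l < n \<and> x \<in> V ?l" using assms by (metis (mono_tags, lifting) someI)
  show ?thesis
  proof (cases "?l = l")
    case True then show ?thesis by (simp add: g_def)
  next
    case False
    have "x \<in> R"
    proof (cases "?l < l")
      case True then show ?thesis using inter[OF True assms(1)] l' assms by blast
    next
      case False
      then have "l < ?l" using \<open>?l \<noteq> l\<close> by linarith
      then show ?thesis using inter[OF \<open>l < ?l\<close>] l' assms by blast
    qed
    then show ?thesis using h_R[OF assms(1,2) _ assms(3)] h_R[OF _ assms(2) _] l'
      by (simp add: g_def)
  qed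
qed

lemma g_hom:
  assumes "t < n" "(u, v) \<in> (\<Union>i<n. E i)"
  shows "(g t u, g t v) \<in> E t"
proof -
  obtain l where l: "l < n" "(u, v) \<in> E l" using assms by auto
  have uv: "u \<in> V l" "v \<in> V l" using Esub[OF l(1)] l by auto
  show ?thesis using g_eq[OF l(1) assms(1) uv(1)] g_eq[OF l(1) assms(1) uv(2)] h_edge[OF l(1) assms(1) l(2)]
    by simp
qed

lemma g_psi:
  assumes "i < j" "j < n" "a \<in> V i"
  shows "g i (\<psi> i j a) = a"
proof -
  have b: "bij_betw (\<psi> i j) (V i) (V j)" using bij[OF assms(1,2)] .
  have "\<psi> i j a \<in> V j" using b assms(3) by (auto dest: bij_betwE)
  then have "g i (\<psi> i j a) = h i j (\<psi> i j a)" using g_eq assms by auto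
  also have "\<dots> = a" using assms bij_betw_imp_inj_on[OF b] by (simp add: h_def inv_into_f_f)
  finally show ?thesis .
qed

lemma g_id:
  assumes "t < n" "a \<in> V t"
  shows "g t a = a"
  using g_eq[OF assms(1) assms] by (simp add: h_def)


lemma part0: "digraph (\<Union>i<n. V i) (\<Union>i<n. E i)"
  unfolding digraph_def
proof (intro conjI allI impI)
  show "(\<Union>i<n. E i) \<subseteq> (\<Union>i<n. V i) \<times> (\<Union>i<n. V i)" using Esub by blast
  fix u v assume uv: "(u, v) \<in> (\<Union>i<n. E i)"
  show "(v, u) \<notin> (\<Union>i<n. E i)"
  proof
    assume vu: "(v, u) \<in> (\<Union>i<n. E i)"
    have "0 < n" using n_pos by simp
    from g_hom[OF this uv] g_hom[OF this vu] digr[OF this] show False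
      unfolding digraph_def by blast
  qed
qed

lemma part1:
  assumes dg: "\<forall>i<n. digirth_gt (V i) (E i) k"
    and ij: "i < j" "j < n" and a: "a \<in> V i - R"
    and p: "dpath (\<Union>i<n. V i) (\<Union>i<n. E i) p" "hd p = a" "last p = \<psi> i j a"
  shows "k < length p - 1"
proof -
  have b: "bij_betw (\<psi> i j) (V i) (V j)" using bij[OF ij] .
  have in_j: "\<psi> i j a \<in> V j" using b a by (auto dest: bij_betwE)
  have "\<psi> i j a \<noteq> a"
  proof
    assume eq: "\<psi> i j a = a"
    then have "a \<in> V i \<inter> V j" using in_j a by auto
    then show False using inter[OF ij] a by blast
  qed
  then have len: "1 \<le> length p - 1" using p
    by (cases p; cases "tl p") (auto simp: dpath_def)
  have "(hd p, last p) \<in> (\<Union>i<n. E i) ^^ (length p - 1)" using path_relpow[OF p(1)] .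
  then have "(g i (hd p), g i (last p)) \<in> E i ^^ (length p - 1)"
    by (rule map_relpow[rotated]) (use g_hom ij in auto)
  moreover have "g i (hd p) = a" using g_id[of i a] ij a p by auto
  moreover have "g i (last p) = a" using g_psi[OF ij] a p by auto
  ultimately have "(a, a) \<in> E i ^^ (length p - 1)" by simp
  from closed_walk_cycle[OF Esub this len] ij obtain c where
    "dcycle (V i) (E i) c" "length c \<le> length p - 1" by auto
  moreover have "i < n" using ij by simp
  ultimately show ?thesis using dg unfolding digirth_gt_def by (meson order.strict_trans2)
qed

lemma part2:
  assumes dg: "\<forall>i<n. digirth_gt (V i) (E i) k"
  shows "digirth_gt (\<Union>i<n. V i) (\<Union>i<n. E i) k"
  unfolding digirth_gt_def
proof (intro allI impI)
  fix c assume c: "dcycle (\<Union>i<n. V i) (\<Union>i<n. E i) c"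
  have m: "0 < length c" using c unfolding dcycle_def by simp
  have "(c ! 0, c ! ((0 + length c) mod length c)) \<in> (\<Union>i<n. E i) ^^ length c"
    using cycle_relpow[OF c m, of "length c"] by simp
  then have cc: "(c ! 0, c ! 0) \<in> (\<Union>i<n. E i) ^^ length c" by simp
  have n0: "0 < n" using n_pos by simp
  have "(g 0 (c ! 0), g 0 (c ! 0)) \<in> E 0 ^^ length c"
    by (rule map_relpow[OF _ cc]) (use g_hom n0 in auto)
  from closed_walk_cycle[OF Esub[OF n0] this] m obtain d where
    "dcycle (V 0) (E 0) d" "length d \<le> length c" by auto
  then show "k < length c" using dg n0 unfolding digirth_gt_def by (meson order.strict_trans2)
qed


lemma part3:
  assumes dg: "\<forall>i<n. digirth_gt (V i) (E i) k"
    and kn: "k < n" and al: "\<forall>i<n. \<alpha> i \<in> V i - R"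
    and alpsi: "\<forall>i j. i < j \<longrightarrow> j < n \<longrightarrow> \<alpha> j = \<psi> i j (\<alpha> i)"
  shows "digirth_gt (\<Union>i<n. V i)
             ((\<Union>i<n. E i) \<union> {(\<alpha> (n - 1), \<alpha> 0)} \<union> {(\<alpha> i, \<alpha> (i + 1)) | i. i < n - 1}) k"
  unfolding digirth_gt_def
proof (intro allI impI)
  let ?N = "{(\<alpha> (n - 1), \<alpha> 0)} \<union> {(\<alpha> i, \<alpha> (i + 1)) | i. i < n - 1}"
  let ?F = "(\<Union>i<n. E i) \<union> {(\<alpha> (n - 1), \<alpha> 0)} \<union> {(\<alpha> i, \<alpha> (i + 1)) | i. i < n - 1}"
  fix c assume c: "dcycle (\<Union>i<n. V i) ?F c"
  let ?m = "length c"
  have m: "0 < ?m" using c unfolding dcycle_def by simp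
  have n0: "0 < n" using n_pos by simp
  have ainj0: "\<And>i j. i < j \<Longrightarrow> j < n \<Longrightarrow> \<alpha> i \<noteq> \<alpha> j"
  proof
    fix i j assume ij: "i < j" "j < n" "\<alpha> i = \<alpha> j"
    have in_: "i < n" using ij(1,2) by (rule less_trans)
    have ai: "\<alpha> i \<in> V i - R" by (rule al[rule_format, OF in_])
    have aj: "\<alpha> j \<in> V j" by (rule DiffD1[OF al[rule_format, OF ij(2)]])
    have aj': "\<alpha> i \<in> V j" by (rule subst[where P="\<lambda>x. x \<in> V j", OF ij(3)[symmetric] aj])
    have ij_int: "\<alpha> i \<in> V i \<inter> V j" by (rule IntI[OF DiffD1[OF ai] aj'])
    have eqR: "V i \<inter> V j = R" by (rule inter[OF ij(1,2)])
    have ir: "\<alpha> i \<in> R" by (rule subst[where P="\<lambda>S. \<alpha> i \<in> S", OF eqR ij_int])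
    show False by (rule DiffD2[OF ai ir])
  qed
  have ainj: "\<And>i j. i < n \<Longrightarrow> j < n \<Longrightarrow> \<alpha> i = \<alpha> j \<Longrightarrow> i = j"
  proof -
    fix i j assume ij: "i < n" "j < n" "\<alpha> i = \<alpha> j"
    show "i = j"
    proof (rule ccontr)
      assume "i \<noteq> j"
      then consider "i < j" | "j < i" by linarith
      then show False
      proof cases
        case 1 show False using ainj0[OF 1 ij(2)] ij(3) by (rule notE)
      next
        case 2 show False using ainj0[OF 2 ij(1)] ij(3)[symmetric] by (rule notE)
      qed
    qed
  qed
  have a0: "\<alpha> 0 \<in> V 0" by (rule DiffD1[OF al[rule_format, OF n0]])
  have g0a: "\<And>j. j < n \<Longrightarrow> g 0 (\<alpha> j) = \<alpha> 0"
  proof -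
    fix j assume j: "j < n"
    show "g 0 (\<alpha> j) = \<alpha> 0"
    proof (cases "j = 0")
      case True
      have "g 0 (\<alpha> 0) = \<alpha> 0" by (rule g_id[OF n0 a0])
      then show ?thesis using True by (simp only:)
    next
      case False then have j0: "0 < j" by simp
      have e: "\<alpha> j = \<psi> 0 j (\<alpha> 0)" by (rule alpsi[rule_format, OF j0 j])
      have "g 0 (\<psi> 0 j (\<alpha> 0)) = \<alpha> 0" by (rule g_psi[OF j0 j a0])
      then show ?thesis using e by (simp only:)
    qed
  qed
  have Fhom: "\<And>u v. (u, v) \<in> ?F \<Longrightarrow> (g 0 u, g 0 v) \<in> E 0 \<union> Id"
  proof -
    fix u v assume uv: "(u, v) \<in> ?F"
    show "(g 0 u, g 0 v) \<in> E 0 \<union> Id"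
    proof (cases "(u, v) \<in> (\<Union>i<n. E i)")
      case True then show ?thesis using g_hom[OF n0] by blast
    next
      case False
      then have "(u, v) \<in> ?N" using uv by blast
      then have "\<exists>i j. i < n \<and> j < n \<and> u = \<alpha> i \<and> v = \<alpha> j"
      proof
        assume "(u, v) \<in> {(\<alpha> (n - 1), \<alpha> 0)}"
        then show ?thesis using n0 by (intro exI[of _ "n - 1"] exI[of _ 0]) auto
      next
        assume "(u, v) \<in> {(\<alpha> i, \<alpha> (i + 1)) | i. i < n - 1}"
        then obtain i where "i < n - 1" "u = \<alpha> i" "v = \<alpha> (i + 1)" by blast
        then show ?thesis by (intro exI[of _ i] exI[of _ "i + 1"]) auto
      qed
      then obtain i j where "i < n" "j < n" "u = \<alpha> i" "v = \<alpha> j" by blast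
      then show ?thesis using g0a by simp
    qed
  qed
  have newstep: "\<And>q y. q < n \<Longrightarrow> (\<alpha> q, y) \<in> ?N \<Longrightarrow> y = \<alpha> ((q + 1) mod n)"
  proof -
    fix q y assume q: "q < n" and e: "(\<alpha> q, y) \<in> ?N"
    show "y = \<alpha> ((q + 1) mod n)"
    proof (cases "(\<alpha> q, y) = (\<alpha> (n - 1), \<alpha> 0)")
      case True
      then have "q = n - 1" using ainj[OF q, of "n - 1"] n0 by auto
      then have "(q + 1) mod n = 0" using n0 by simp
      then show ?thesis using True by simp
    next
      case False
      then have "(\<alpha> q, y) \<in> {(\<alpha> i, \<alpha> (i + 1)) | i. i < n - 1}" using e by blast
      then obtain i where i: "i < n - 1" "\<alpha> q = \<alpha> i" "y = \<alpha> (i + 1)" by blast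
      then have "q = i" using ainj[OF q, of i] by auto
      then show ?thesis using i by simp
    qed
  qed
  show "k < ?m"
  proof (rule ccontr)
    assume "\<not> k < ?m"
    then have mk: "?m \<le> k" by simp
    show False
    proof (cases "\<exists>s<?m. (c ! s, c ! ((s + 1) mod ?m)) \<in> (\<Union>i<n. E i)")
      case True
      then obtain s where s: "s < ?m" "(c ! s, c ! ((s + 1) mod ?m)) \<in> (\<Union>i<n. E i)" by blast
      define s' where "s' = (s + 1) mod ?m"
      have s'm: "s' < ?m" using m by (simp add: s'_def)
      have "(s' + (?m - 1)) mod ?m = s"
      proof (cases "s + 1 < ?m")
        case True
        then have "s' + (?m - 1) = s + ?m" by (simp add: s'_def)
        then show ?thesis using s by simp
      next
        case False then have "s + 1 = ?m" using s by simp
        then show ?thesis using s by (simp add: s'_def)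
      qed
      then have w: "(c ! s', c ! s) \<in> ?F ^^ (?m - 1)"
        using cycle_relpow[OF c s'm, of "?m - 1"] by simp
      have "(g 0 (c ! s'), g 0 (c ! s)) \<in> (E 0 \<union> Id) ^^ (?m - 1)"
        by (rule map_relpow[where g="g 0", OF Fhom w])
      from lazy_relpow[OF this] obtain j where j: "j \<le> ?m - 1" "(g 0 (c ! s'), g 0 (c ! s)) \<in> E 0 ^^ j"
        by (elim exE conjE)
      have "(g 0 (c ! s), g 0 (c ! s')) \<in> E 0" using g_hom[OF n0 s(2)] by (simp add: s'_def)
      from relpow_Suc_I2[OF this j(2)]
      have "(g 0 (c ! s), g 0 (c ! s)) \<in> E 0 ^^ Suc j" .
      from closed_walk_cycle[OF Esub[OF n0] this] obtain d where
        "dcycle (V 0) (E 0) d" "length d \<le> Suc j" by auto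
      moreover have "Suc j \<le> k" using j mk m by linarith
      ultimately show False using dg n0 unfolding digirth_gt_def by (meson le_trans not_le)
    next
      case False
      have edN: "\<And>s. s < ?m \<Longrightarrow> (c ! s, c ! ((s + 1) mod ?m)) \<in> ?N"
      proof -
        fix s assume "s < ?m"
        then have "(c ! s, c ! ((s + 1) mod ?m)) \<in> ?F" using c unfolding dcycle_def by blast
        then show "(c ! s, c ! ((s + 1) mod ?m)) \<in> ?N" using False \<open>s < ?m\<close> by blast
      qed
      obtain p where p: "p < n" "c ! 0 = \<alpha> p"
      proof -
        have "(c ! 0, c ! ((0 + 1) mod ?m)) \<in> ?N" using edN[OF m] .
        then have "\<exists>p<n. c ! 0 = \<alpha> p"
        proof
          assume "(c ! 0, c ! ((0 + 1) mod ?m)) \<in> {(\<alpha> (n - 1), \<alpha> 0)}"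
          then show ?thesis using n0 by (intro exI[of _ "n - 1"]) auto
        next
          assume "(c ! 0, c ! ((0 + 1) mod ?m)) \<in> {(\<alpha> i, \<alpha> (i + 1)) | i. i < n - 1}"
          then obtain i where "i < n - 1" "c ! 0 = \<alpha> i" by blast
          then show ?thesis by (intro exI[of _ i]) auto
        qed
        then show ?thesis using that by blast
      qed
      have claim: "\<And>t. t \<le> ?m \<Longrightarrow> c ! (t mod ?m) = \<alpha> ((p + t) mod n)"
      proof -
        fix t show "t \<le> ?m \<Longrightarrow> c ! (t mod ?m) = \<alpha> ((p + t) mod n)"
        proof (induction t)
          case 0 then show ?case using p by simp
        next
          case (Suc t)
          have tm: "t mod ?m < ?m" using m by simp
          have ih: "c ! (t mod ?m) = \<alpha> ((p + t) mod n)" using Suc by simp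
          have "(\<alpha> ((p + t) mod n), c ! ((t mod ?m + 1) mod ?m)) \<in> ?N"
            using edN[OF tm] ih by simp
          then have "c ! ((t mod ?m + 1) mod ?m) = \<alpha> (((p + t) mod n + 1) mod n)"
            using newstep[of "(p + t) mod n"] n0 by auto
          moreover have "(t mod ?m + 1) mod ?m = Suc t mod ?m" by (simp add: mod_Suc_eq)
          moreover have "((p + t) mod n + 1) mod n = (p + Suc t) mod n" by (simp add: mod_Suc_eq)
          ultimately show ?case by simp
        qed
      qed
      have "\<alpha> p = \<alpha> ((p + ?m) mod n)" using claim[of ?m] p by simp
      then have pm: "(p + ?m) mod n = p" using ainj[OF p(1), of "(p + ?m) mod n"] n0 by simp
      have "n \<le> ?m"
      proof (rule ccontr)
        assume "\<not> n \<le> ?m"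
        then have mn: "?m < n" by simp
        show False
        proof (cases "p + ?m < n")
          case True then show False using pm m by simp
        next
          case False
          then have "(p + ?m) mod n = (p + ?m - n) mod n" by (simp add: le_mod_geq)
          also have "\<dots> = p + ?m - n" using mn p by simp
          finally have "p + ?m - n = p" using pm by simp
          then show False using mn False by arith
        qed
      qed
      then show False using mk kn by simp
    qed
  qed
qed

end

theorem lemma2p1:
  fixes n :: nat
    and V :: "nat \<Rightarrow> 'a set"
    and E :: "nat \<Rightarrow> ('a \<times> 'a) set"
    and R :: "'a set"
    and \<psi> :: "nat \<Rightarrow> nat \<Rightarrow> 'a \<Rightarrow> 'a"
  assumes n_pos: "n \<ge> 1"
    and digr: "\<And>i. i < n \<Longrightarrow> digraph (V i) (E i)"
    and inter: "\<And>i j. i < j \<Longrightarrow> j < n \<Longrightarrow> V i \<inter> V j = R"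
    and bij: "\<And>i j. i < j \<Longrightarrow> j < n \<Longrightarrow> bij_betw (\<psi> i j) (V i) (V j)"
    and iso: "\<And>i j u v. i < j \<Longrightarrow> j < n \<Longrightarrow> u \<in> V i \<Longrightarrow> v \<in> V i \<Longrightarrow>
                ((u, v) \<in> E i \<longleftrightarrow> (\<psi> i j u, \<psi> i j v) \<in> E j)"
    and idR: "\<And>i j x. i < j \<Longrightarrow> j < n \<Longrightarrow> x \<in> R \<Longrightarrow> \<psi> i j x = x"
  shows "digraph (\<Union>i<n. V i) (\<Union>i<n. E i) \<and>
    (\<forall>k::nat. k \<ge> 3 \<longrightarrow> (\<forall>i<n. digirth_gt (V i) (E i) k) \<longrightarrow>
       (\<forall>i j a p. i < j \<longrightarrow> j < n \<longrightarrow> a \<in> V i - R \<longrightarrow>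
           dpath (\<Union>i<n. V i) (\<Union>i<n. E i) p \<longrightarrow> hd p = a \<longrightarrow> last p = \<psi> i j a \<longrightarrow>
           k < length p - 1)
     \<and> digirth_gt (\<Union>i<n. V i) (\<Union>i<n. E i) k
     \<and> (\<forall>\<alpha> :: nat \<Rightarrow> 'a. k < n \<longrightarrow> (\<forall>i<n. \<alpha> i \<in> V i - R) \<longrightarrow>
           (\<forall>i j. i < j \<longrightarrow> j < n \<longrightarrow> \<alpha> j = \<psi> i j (\<alpha> i)) \<longrightarrow>
           digirth_gt (\<Union>i<n. V i)
             ((\<Union>i<n. E i) \<union> {(\<alpha> (n - 1), \<alpha> 0)} \<union> {(\<alpha> i, \<alpha> (i + 1)) | i. i < n - 1}) k))"
proof -
  have L: "L n V E R \<psi>" using n_pos digr inter bij iso idR by (rule L.intro)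
  show ?thesis
  proof (intro conjI allI impI)
    show "digraph (\<Union>i<n. V i) (\<Union>i<n. E i)" by (rule L.part0[OF L])
  next
    fix k :: nat assume dg: "\<forall>i<n. digirth_gt (V i) (E i) k"
    {
      fix i j a p
      assume "i < j" "j < n" "a \<in> V i - R" "dpath (\<Union>i<n. V i) (\<Union>i<n. E i) p"
        "hd p = a" "last p = \<psi> i j a"
      then show "k < length p - 1" by (rule L.part1[OF L dg])
    }
    show "digirth_gt (\<Union>i<n. V i) (\<Union>i<n. E i) k" by (rule L.part2[OF L dg])
    fix \<alpha> :: "nat \<Rightarrow> 'a"
    assume "k < n" "\<forall>i<n. \<alpha> i \<in> V i - R"
      "\<forall>i j. i < j \<longrightarrow> j < n \<longrightarrow> \<alpha> j = \<psi> i j (\<alpha> i)"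
    then show "digirth_gt (\<Union>i<n. V i)
             ((\<Union>i<n. E i) \<union> {(\<alpha> (n - 1), \<alpha> 0)} \<union> {(\<alpha> i, \<alpha> (i + 1)) | i. i < n - 1}) k"
      by (rule L.part3[OF L dg])
  qed
qed

end
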